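(* Let $m\ge1$ and let $u$ be an $m$-labeled binary tree with $|u|=p$ edges. The generating function $\mathbf C^{\mathcal B}_{m,p}(z)=\sum_{n\ge0} c_n z^n$, where $c_n$ is the number of $m$-labeled binary trees with $n$ edges that contain $u$ as a subtree, is $$\mathbf C^{\mathcal B}_{m,p}(z)=\frac{1}{2mz^2}\left(\sqrt{1-4mz+4mz^{p+2}}-\sqrt{1-4mz}\right).$$
   Context: An $m$-labeled binary tree is a non-empty finite rooted tree whose nodes carry labels from $\{1,\dots,m\}$ and in which every node has an optional left child and an optional right child (a node with only a left child is distinct from one with only a right child). Its size is its number of edges. A tree $t$ contains $u$ as a subtree if for some node $v$ of $t$, the subtree of $t$ rooted at $v$ (consisting of $v$ and all its descendants) equals $u$. *)

theory Defs
  imports Complex_Main "HOL-Library.Tree"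
begin

text \<open>An m-labeled binary tree: a non-empty tree (Leaf denotes the absent child)
  whose node labels lie in {1..m}.\<close>
definition labeled_bt :: "nat \<Rightarrow> nat tree \<Rightarrow> bool" where
  "labeled_bt m t \<longleftrightarrow> t \<noteq> Leaf \<and> set_tree t \<subseteq> {1..m}"

definition edges :: "'a tree \<Rightarrow> nat" where
  "edges t = size t - 1"

definition contains_subtree :: "'a tree \<Rightarrow> 'a tree \<Rightarrow> bool" where
  "contains_subtree t u \<longleftrightarrow> u \<in> subtrees t"

definition count_containing :: "nat \<Rightarrow> nat tree \<Rightarrow> nat \<Rightarrow> nat" where
  "count_containing m u n = card {t. labeled_bt m t \<and> edges t = n \<and> contains_subtree t u}"

end

theory Submission
  imports Defs
begin


definition conv :: "(nat \<Rightarrow> real) \<Rightarrow> nat \<Rightarrow> real" where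
  "conv b k = (\<Sum>i\<le>k. b i * b (k - i))"

lemma conv_partial_le:
  assumes nn: "\<And>k. b k \<ge> 0" and x: "x \<ge> (0::real)"
  shows "(\<Sum>k<N. conv b k * x^k) \<le> (\<Sum>k<N. b k * x^k)^2"
proof -
  define g where "g i j = (b i * x^i) * (b j * x^j)" for i j
  have "(\<Sum>k<N. conv b k * x^k) = (\<Sum>k<N. \<Sum>i\<le>k. g i (k - i))"
  proof (rule sum.cong[OF refl])
    fix k assume "k \<in> {..<N}"
    have "g i (k - i) = b i * b (k - i) * x^k" if "i \<le> k" for i
      using that by (simp add: g_def power_add[symmetric])
    thus "conv b k * x^k = (\<Sum>i\<le>k. g i (k - i))"
      unfolding conv_def by (simp add: sum_distrib_right)
  qed
  also have "\<dots> = (\<Sum>(i,j)\<in>{(i,j). i+j < N}. g i j)"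
    by (rule sum.triangle_reindex[symmetric])
  also have "\<dots> \<le> (\<Sum>(i,j)\<in>{..<N}\<times>{..<N}. g i j)"
    by (rule sum_mono2) (auto simp: g_def nn x)
  also have "\<dots> = (\<Sum>k<N. b k * x^k)^2"
    by (simp add: power2_eq_square sum_product sum.cartesian_product g_def)
  finally show ?thesis .
qed

lemma bound_lemma:
  fixes b :: "nat \<Rightarrow> real" and m :: nat and x :: real
  assumes nn: "\<And>k. b k \<ge> 0" and b0: "b 0 = 1"
    and rec: "\<And>k. b (Suc k) \<le> real m * conv b k"
    and x: "0 < x" "4 * real m * x < 1" and m: "m \<ge> 1"
  defines "y \<equiv> (1 - sqrt (1 - 4*real m*x)) / (2*real m*x)"
  shows "summable (\<lambda>k. b k * x^k)" "(\<Sum>k. b k * x^k) \<le> y"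
proof -
  have sq: "sqrt (1 - 4*real m*x) ^ 2 = 1 - 4*real m*x" using x by simp
  have s0: "sqrt (1 - 4*real m*x) < 1" using x m by (subst real_sqrt_one[symmetric], subst real_sqrt_less_iff) simp
  have mx: "real m * x > 0" using x m by simp
  have yfix: "y = 1 + real m*x*y^2"
  proof -
    have "2*real m*x*y = 1 - sqrt (1 - 4*real m*x)" unfolding y_def using mx by simp
    hence "(2*real m*x*y)^2 = 1 - 2* sqrt (1 - 4*real m*x) + (1 - 4*real m*x)"
      by (simp add: power2_diff sq)
    hence e: "(2*real m*x*y)^2 = 2*(2*real m*x*y) - 4*real m*x" using \<open>2*real m*x*y = _\<close> by linarith
    have "(2*real m*x*y)^2 = 4*(real m*x)*(real m*x*y^2)" by (simp add: power_mult_distrib power2_eq_square)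
    moreover have "2*(2*real m*x*y) - 4*real m*x = 4*(real m*x)*(y - 1)" by (simp add: algebra_simps)
    ultimately have "4*(real m*x)*(real m*x*y^2) = 4*(real m*x)*(y - 1)" using e by simp
    hence "real m*x*y^2 = y - 1" using mx x by auto
    thus ?thesis by simp
  qed
  have y1: "y \<ge> 1" proof - have "real m*x*y^2 \<ge> 0" using mx by simp thus ?thesis using yfix by linarith qed
  have P: "(\<Sum>k<N. b k * x^k) \<le> y" for N
  proof (induction N)
    case 0 then show ?case using y1 by simp
  next
    case (Suc N)
    have nnS: "0 \<le> (\<Sum>k<N. b k * x^k)" using nn x by (auto intro!: sum_nonneg)
    have "(\<Sum>k<Suc N. b k * x^k) = 1 + (\<Sum>k<N. b (Suc k) * x^(Suc k))"
      by (subst sum.lessThan_Suc_shift) (simp add: b0)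
    also have "\<dots> \<le> 1 + (\<Sum>k<N. real m * x * (conv b k * x^k))"
      using rec x by (auto intro!: sum_mono mult_right_mono simp: algebra_simps)
    also have "\<dots> = 1 + real m*x*(\<Sum>k<N. conv b k * x^k)" by (simp add: sum_distrib_left)
    also have "\<dots> \<le> 1 + real m*x*(\<Sum>k<N. b k * x^k)^2"
      using conv_partial_le[of b x N, OF nn] x mx by (auto intro!: mult_left_mono)
    also have "\<dots> \<le> 1 + real m*x*y^2"
      using Suc nnS mx by (auto intro!: mult_left_mono power_mono)
    finally show ?case using yfix by simp
  qed
  show sm: "summable (\<lambda>k. b k * x^k)"
    by (rule bounded_imp_summable[where B=y]) (use nn x P[of "Suc _"] in \<open>auto simp: lessThan_Suc_atMost\<close>)
  show "(\<Sum>k. b k * x^k) \<le> y" by (rule suminf_le_const[OF sm P])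
qed

lemma conv_sums:
  fixes b :: "nat \<Rightarrow> real"
  assumes "summable (\<lambda>k. norm (b k * x^k))"
  shows "(\<lambda>k. conv b k * x^k) sums (\<Sum>k. b k * x^k)^2"
proof -
  have "(\<lambda>k. \<Sum>i\<le>k. (b i * x^i) * (b (k-i) * x^(k-i))) sums ((\<Sum>k. b k * x^k) * (\<Sum>k. b k * x^k))"
    by (rule Cauchy_product_sums[OF assms assms])
  moreover have "(\<Sum>i\<le>k. (b i * x^i) * (b (k-i) * x^(k-i))) = conv b k * x^k" for k
  proof -
    have h: "(b i * x^i) * (b (k-i) * x^(k-i)) = b i * b (k - i) * x^k" if "i \<le> k" for i
    proof -
      have "x^i * x^(k-i) = x^k" using that by (simp add: power_add[symmetric])
      thus ?thesis by (metis mult.assoc mult.left_commute)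
    qed
    show ?thesis unfolding conv_def sum_distrib_right by (rule sum.cong[OF refl]) (simp add: h)
  qed
  ultimately show ?thesis by (simp add: power2_eq_square)
qed

lemma quad_eq:
  fixes b :: "nat \<Rightarrow> real" and m :: nat and x c :: real and q :: nat
  assumes sm: "summable (\<lambda>k. norm (b k * x^k))" and b0: "b 0 = 1"
    and rec: "\<And>k. b (Suc k) = real m * conv b k - (if Suc k = q then c else 0)"
    and q: "q \<ge> 1"
  shows "(\<Sum>k. b k * x^k) = 1 + real m * x * (\<Sum>k. b k * x^k)^2 - c * x^q"
proof -
  define S where "S = (\<Sum>k. b k * x^k)"
  have s1: "(\<lambda>k. real m * x * (conv b k * x^k)) sums (real m * x * S^2)"
    using sums_mult[OF conv_sums[OF sm]] unfolding S_def .
  have s2: "(\<lambda>k. if k = q - 1 then c * x^(Suc k) else 0) sums (c * x^(Suc (q-1)))"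
    by (rule sums_single)
  have "(\<lambda>k. real m * x * (conv b k * x^k) - (if k = q - 1 then c * x^(Suc k) else 0)) sums (real m * x * S^2 - c * x^(Suc (q-1)))"
    by (rule sums_diff[OF s1 s2])
  moreover have "(\<lambda>k. real m * x * (conv b k * x^k) - (if k = q - 1 then c * x^(Suc k) else 0)) = (\<lambda>k. b (Suc k) * x^(Suc k))"
  proof (rule ext)
    fix k
    have "(k = q - 1) = (Suc k = q)" using q by auto
    thus "real m * x * (conv b k * x^k) - (if k = q - 1 then c * x^(Suc k) else 0) = b (Suc k) * x^(Suc k)"
      by (cases "q = Suc k") (auto simp: rec algebra_simps)
  qed
  ultimately have "(\<lambda>k. b (Suc k) * x^(Suc k)) sums (real m * x * S^2 - c * x^q)"
    using q by simp
  hence "(\<lambda>k. b k * x^k) sums (real m * x * S^2 - c * x^q + b 0 * x^0)"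
    by (subst (asm) sums_Suc_iff)
  hence "S = real m * x * S^2 - c * x^q + 1" unfolding S_def using b0 by (simp add: sums_iff)
  thus ?thesis unfolding S_def by simp
qed

lemma closed_form:
  fixes b :: "nat \<Rightarrow> real" and m :: nat and x c :: real and q :: nat
  assumes nn: "\<And>k. b k \<ge> 0" and b0: "b 0 = 1"
    and rec: "\<And>k. b (Suc k) = real m * conv b k - (if Suc k = q then c else 0)"
    and q: "q \<ge> 1" and c: "c \<ge> 0" and m: "m \<ge> 1"
    and x0: "x \<noteq> 0" and xb: "\<bar>x\<bar> < 1 / (4 * real m)"
  shows "(\<lambda>k. b k * x^k) sums ((1 - sqrt (1 - 4 * real m * x + 4 * real m * c * x^(q+1))) / (2 * real m * x))"
proof -
  define ax where "ax = \<bar>x\<bar>"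
  have ax: "0 < ax" "4 * real m * ax < 1" using x0 xb m unfolding ax_def by (auto simp: field_simps)
  have rec': "b (Suc k) \<le> real m * conv b k" for k using rec[of k] c by auto
  note B = bound_lemma[of b m ax, OF nn b0 rec' ax m]
  have eqn: "norm (b k * x^k) = b k * ax^k" for k using nn[of k] by (simp add: ax_def abs_mult power_abs)
  have sm: "summable (\<lambda>k. norm (b k * x^k))" unfolding eqn by (rule B(1))
  define S where "S = (\<Sum>k. b k * x^k)"
  have Q: "S = 1 + real m * x * S^2 - c * x^q" unfolding S_def by (rule quad_eq[OF sm b0 rec q])
  have "\<bar>S\<bar> \<le> (\<Sum>k. norm (b k * x^k))" unfolding S_def using summable_norm[OF sm] by simp
  also have "\<dots> \<le> (1 - sqrt (1 - 4*real m*ax)) / (2*real m*ax)" unfolding eqn by (rule B(2))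
  finally have Sb: "\<bar>S\<bar> \<le> (1 - sqrt (1 - 4*real m*ax)) / (2*real m*ax)" .
  have mpos: "real m > 0" using m by simp
  have "\<bar>2 * real m * x * S\<bar> = 2 * real m * ax * \<bar>S\<bar>" by (simp add: abs_mult ax_def)
  also have "\<dots> \<le> 2 * real m * ax * ((1 - sqrt (1 - 4*real m*ax)) / (2*real m*ax))"
    using Sb ax mpos by (intro mult_left_mono) auto
  also have "\<dots> = 1 - sqrt (1 - 4*real m*ax)" using ax mpos by simp
  also have "\<dots> < 1" proof - have "sqrt (1 - 4*real m*ax) > 0" using ax by simp thus ?thesis by linarith qed
  finally have lt0: "\<bar>2 * real m * x * S\<bar> < 1" .
  have lt: "2 * real m * x * S < 1" using lt0 abs_ge_self[of "2 * real m * x * S"] by linarith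
  have "(2 * real m * x * S - 1)^2 = 4 * real m * x * (real m * x * S^2 - S) + 1"
    by (simp add: power2_eq_square algebra_simps)
  also have "\<dots> = 1 - 4 * real m * x + 4 * real m * c * x^(q+1)"
  proof -
    have e: "real m * x * S^2 - S = c * x^q - 1" using Q by linarith
    have "4 * real m * x * (real m * x * S^2 - S) + 1 = 4 * real m * x * (c * x^q - 1) + 1" by (simp only: e)
    also have "\<dots> = 1 - 4 * real m * x + 4 * real m * c * x^(q+1)" by (simp add: algebra_simps)
    finally show ?thesis .
  qed
  finally have D0: "(2 * real m * x * S - 1)^2 = 1 - 4 * real m * x + 4 * real m * c * x^(q+1)" .
  have D: "sqrt (1 - 4 * real m * x + 4 * real m * c * x^(q+1)) = 1 - 2 * real m * x * S"
  proof -
    have "sqrt (1 - 4 * real m * x + 4 * real m * c * x^(q+1)) = \<bar>2 * real m * x * S - 1\<bar>"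
      by (simp only: D0[symmetric] real_sqrt_abs)
    moreover have "\<bar>2 * real m * x * S - 1\<bar> = -(2 * real m * x * S - 1)"
      using lt by (intro abs_of_neg) linarith
    ultimately show ?thesis by linarith
  qed
  have "S = (1 - sqrt (1 - 4 * real m * x + 4 * real m * c * x^(q+1))) / (2 * real m * x)"
  proof -
    have nz: "2 * real m * x \<noteq> 0" using x0 mpos by simp
    have A: "1 - (1 - 2 * real m * x * S) = S * (2 * real m * x)" by (simp add: mult_ac)
    have B: "S * (2 * real m * x) / (2 * real m * x) = S" using nz by (rule nonzero_mult_div_cancel_right)
    show ?thesis unfolding D by (simp only: A B)
  qed
  moreover have "(\<lambda>k. b k * x^k) sums S" unfolding S_def
    by (rule summable_sums[OF summable_norm_cancel[OF sm]])
  ultimately show ?thesis by simp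
qed



definition Av :: "nat \<Rightarrow> nat tree set \<Rightarrow> nat \<Rightarrow> nat tree set" where
  "Av m U k = {t. set_tree t \<subseteq> {1..m} \<and> size t = k \<and> (\<forall>u\<in>U. u \<notin> subtrees t)}"

definition Img :: "nat \<Rightarrow> nat tree set \<Rightarrow> nat \<Rightarrow> (nat \<times> nat \<times> nat tree \<times> nat tree) set" where
  "Img m U k = (SIGMA i:{..k}. {1..m} \<times> Av m U i \<times> Av m U (k - i))"

definition mk :: "nat \<times> nat \<times> nat tree \<times> nat tree \<Rightarrow> nat tree" where
  "mk = (\<lambda>(i,a,l,r). Node l a r)"

lemma Av_0: "Av m U 0 = (if Leaf \<in> U then {} else {Leaf})"
  by (auto simp: Av_def)

lemma Av_Suc: "Av m U (Suc k) = mk ` Img m U k - U"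
proof (intro equalityI subsetI)
  fix t assume t: "t \<in> Av m U (Suc k)"
  then obtain l a r where tn: "t = Node l a r" by (cases t) (auto simp: Av_def)
  have "(size l, a, l, r) \<in> Img m U k" using t unfolding tn Av_def Img_def by auto
  moreover have "t \<notin> U" using t unfolding tn Av_def by auto
  ultimately show "t \<in> mk ` Img m U k - U" unfolding tn mk_def by force
next
  fix t assume t: "t \<in> mk ` Img m U k - U"
  then obtain i a l r where tn: "t = Node l a r" and i: "i \<le> k" and a: "a \<in> {1..m}"
    and l: "l \<in> Av m U i" and r: "r \<in> Av m U (k - i)" and tU: "t \<notin> U"
    by (auto simp: mk_def Img_def)
  show "t \<in> Av m U (Suc k)" using l r a i tU unfolding tn Av_def by auto
qed

lemma finite_Av: "finite (Av m U k)"
proof (induction k rule: less_induct)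
  case (less k)
  show ?case
  proof (cases k)
    case 0 then show ?thesis by (simp add: Av_0)
  next
    case (Suc j)
    have "finite (Img m U j)" unfolding Img_def using less Suc
      by (intro finite_SigmaI finite_cartesian_product) auto
    then show ?thesis unfolding Suc Av_Suc by auto
  qed
qed

lemma inj_mk: "inj_on mk (Img m U k)"
  by (auto simp: inj_on_def mk_def Img_def Av_def)

lemma card_Img: "card (Img m U k) = m * (\<Sum>i\<le>k. card (Av m U i) * card (Av m U (k - i)))"
  unfolding Img_def
  by (subst card_SigmaI) (auto simp: finite_Av card_cartesian_product sum_distrib_left mult.assoc)

lemma card_Av_empty:
  "real (card (Av m {} (Suc k))) = real m * conv (\<lambda>i. real (card (Av m {} i))) k"
proof -
  have "card (Av m {} (Suc k)) = card (Img m {} k)"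
    unfolding Av_Suc by (simp add: card_image[OF inj_mk])
  thus ?thesis unfolding card_Img conv_def by simp
qed

lemma mem_Img:
  assumes u: "labeled_bt m u" and s: "size u = Suc k"
  shows "u \<in> mk ` Img m {u} k"
proof -
  obtain l a r where un: "u = Node l a r" using u by (cases u) (auto simp: labeled_bt_def)
  have ul: "u \<notin> subtrees l"
    using size_subtrees[of u l] un by auto
  have ur: "u \<notin> subtrees r"
    using size_subtrees[of u r] un by auto
  have "(size l, a, l, r) \<in> Img m {u} k"
    using u s ul ur unfolding un Img_def Av_def labeled_bt_def by auto
  thus ?thesis unfolding un mk_def by force
qed

lemma size_Img: "x \<in> mk ` Img m U k \<Longrightarrow> size x = Suc k"
  by (auto simp: mk_def Img_def Av_def)

lemma card_Av_u:
  assumes u: "labeled_bt m u"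
  shows "real (card (Av m {u} (Suc k))) = real m * conv (\<lambda>i. real (card (Av m {u} i))) k
          - (if Suc k = size u then 1 else 0)"
proof -
  have fin: "finite (mk ` Img m {u} k)" using finite_Av[of m "{u}" "Suc k"]
    unfolding Img_def by (intro finite_imageI finite_SigmaI finite_cartesian_product) (auto simp: finite_Av)
  have ci: "card (mk ` Img m {u} k) = card (Img m {u} k)" by (simp add: card_image[OF inj_mk])
  show ?thesis
  proof (cases "Suc k = size u")
    case True
    have mem: "u \<in> mk ` Img m {u} k" using mem_Img[OF u] True by simp
    have pos: "card (mk ` Img m {u} k) \<ge> 1" using fin mem
      by (metis card_0_eq empty_iff less_one not_le)
    have "card (Av m {u} (Suc k)) = card (mk ` Img m {u} k) - 1"
      unfolding Av_Suc using fin mem by simp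
    hence "real (card (Av m {u} (Suc k))) = real (card (mk ` Img m {u} k)) - 1"
      using pos by (simp add: of_nat_diff)
    thus ?thesis using True unfolding ci card_Img conv_def by simp
  next
    case False
    have "u \<notin> mk ` Img m {u} k" using size_Img False by metis
    hence "Av m {u} (Suc k) = mk ` Img m {u} k" unfolding Av_Suc by auto
    thus ?thesis using False unfolding ci[symmetric] card_Img[symmetric]
      by (simp add: ci card_Img conv_def)
  qed
qed

lemma count_eq:
  assumes u: "labeled_bt m u"
  shows "real (count_containing m u n) = real (card (Av m {} (Suc n))) - real (card (Av m {u} (Suc n)))"
proof -
  have sub: "Av m {u} (Suc n) \<subseteq> Av m {} (Suc n)" by (auto simp: Av_def)
  have "{t. labeled_bt m t \<and> edges t = n \<and> contains_subtree t u} = Av m {} (Suc n) - Av m {u} (Suc n)"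
  proof (intro equalityI subsetI)
    fix t assume "t \<in> {t. labeled_bt m t \<and> edges t = n \<and> contains_subtree t u}"
    then show "t \<in> Av m {} (Suc n) - Av m {u} (Suc n)"
      by (cases t) (auto simp: labeled_bt_def edges_def contains_subtree_def Av_def)
  next
    fix t assume "t \<in> Av m {} (Suc n) - Av m {u} (Suc n)"
    then show "t \<in> {t. labeled_bt m t \<and> edges t = n \<and> contains_subtree t u}"
      by (cases t) (auto simp: labeled_bt_def edges_def contains_subtree_def Av_def)
  qed
  hence "count_containing m u n = card (Av m {} (Suc n)) - card (Av m {u} (Suc n))"
    unfolding count_containing_def using sub finite_Av by (simp add: card_Diff_subset)
  moreover have "card (Av m {u} (Suc n)) \<le> card (Av m {} (Suc n))"
    using sub finite_Av by (rule card_mono[rotated])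
  ultimately show ?thesis by (simp add: of_nat_diff)
qed



theorem lemma8:
  fixes m p :: nat and u :: "nat tree" and z :: real
  assumes "m \<ge> 1" and "labeled_bt m u" and "edges u = p"
    and "z \<noteq> 0" and "\<bar>z\<bar> < 1 / (4 * real m)"
  shows "(\<lambda>n. real (count_containing m u n) * z ^ n) sums
           ((sqrt (1 - 4 * real m * z + 4 * real m * z ^ (p + 2)) - sqrt (1 - 4 * real m * z))
              / (2 * real m * z ^ 2))"
proof -
  note m = assms(1) and u = assms(2) and z0 = assms(4) and zb = assms(5)
  have su: "size u = p + 1" using assms(2,3) unfolding labeled_bt_def edges_def
    by (cases u) auto
  define T where "T k = real (card (Av m {} k))" for k
  define A where "A k = real (card (Av m {u} k))" for k
  have T0: "T 0 = 1" unfolding T_def by (simp add: Av_0)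
  have A0: "A 0 = 1" using u unfolding A_def labeled_bt_def by (auto simp: Av_0)
  have Trec: "T (Suc k) = real m * conv T k - (if Suc k = 1 then 0 else 0)" for k
    unfolding T_def using card_Av_empty by simp
  have Arec: "A (Suc k) = real m * conv A k - (if Suc k = p + 1 then 1 else 0)" for k
    unfolding A_def using card_Av_u[OF u, of k] su by simp
  define D0 where "D0 = sqrt (1 - 4 * real m * z + 4 * real m * 0 * z^(1+1))"
  define D1 where "D1 = sqrt (1 - 4 * real m * z + 4 * real m * 1 * z^(p+1+1))"
  have sT: "(\<lambda>k. T k * z^k) sums ((1 - D0) / (2 * real m * z))"
    unfolding D0_def by (rule closed_form[OF _ T0 Trec _ _ m z0 zb]) (auto simp: T_def)
  have sA: "(\<lambda>k. A k * z^k) sums ((1 - D1) / (2 * real m * z))"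
    unfolding D1_def by (rule closed_form[OF _ A0 Arec _ _ m z0 zb]) (auto simp: A_def)
  have sT': "(\<lambda>k. T (Suc k) * z^(Suc k)) sums ((1 - D0) / (2 * real m * z) - 1)"
    using sT T0 by (subst sums_Suc_iff) simp
  have sA': "(\<lambda>k. A (Suc k) * z^(Suc k)) sums ((1 - D1) / (2 * real m * z) - 1)"
    using sA A0 by (subst sums_Suc_iff) simp
  have "(\<lambda>k. (T (Suc k) * z^(Suc k) - A (Suc k) * z^(Suc k)) / z) sums
          ((((1 - D0) / (2 * real m * z) - 1) - ((1 - D1) / (2 * real m * z) - 1)) / z)"
    by (rule sums_divide[OF sums_diff[OF sT' sA']])
  moreover have "(\<lambda>k. (T (Suc k) * z^(Suc k) - A (Suc k) * z^(Suc k)) / z)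
      = (\<lambda>n. real (count_containing m u n) * z ^ n)"
  proof (rule ext)
    fix k
    have "(T (Suc k) * z^(Suc k) - A (Suc k) * z^(Suc k)) / z = (T (Suc k) - A (Suc k)) * z^k"
      using z0 by (simp add: field_simps)
    thus "(T (Suc k) * z^(Suc k) - A (Suc k) * z^(Suc k)) / z = real (count_containing m u k) * z ^ k"
      by (simp add: count_eq[OF u] T_def A_def)
  qed
  moreover have "(((1 - D0) / (2 * real m * z) - 1) - ((1 - D1) / (2 * real m * z) - 1)) / z
      = (D1 - D0) / (2 * real m * z ^ 2)"
    using z0 m by (simp add: field_simps power2_eq_square)
  moreover have "D1 = sqrt (1 - 4 * real m * z + 4 * real m * z ^ (p + 2))"
    "D0 = sqrt (1 - 4 * real m * z)" unfolding D0_def D1_def by (simp_all add: numeral_2_eq_2)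
  ultimately show ?thesis by simp
qed

end
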